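(* Suppose Assumption A(ii) holds and $F$ is strongly $K$-convex with some modulus in $\mathrm{int}(K)$. Let $\{x^k\}$ be an infinite sequence generated by Algorithm 1 with $G_k\in\mathcal{S}_{\ell,\mu}(F,x^k)$ for all $k$, where $\ell\prec_K\mu$. Then: (i) $\{x^k\}$ converges to an efficient solution $x^*$ of $\min_K F(x)$; (ii) $\|x^{k+1}-x^*\|\le\sqrt{\max_{c^*\in C}\frac{\langle c^*,\ell\rangle}{\langle c^*,\mu\rangle}}\,\|x^k-x^*\|$ for all $k\ge0$.
   Context: $K\subset\mathbb{R}^m$ is a closed, convex, pointed cone with nonempty interior; $y\preceq_K y'$ iff $y'-y\in K$, $y\prec_K y'$ iff $y'-y\in\mathrm{int}(K)$. $K^*=\{c:\langle c,y\rangle\ge0\ \forall y\in K\}$; $C$ is a compact convex set with $0\notin C$, $\mathrm{cone}(C)=K^*$. $F:\mathbb{R}^n\to\mathbb{R}^m$ differentiable with Jacobian $JF$. $x^*$ is efficient if there is no $x$ with $F(x)\preceq_K F(x^* )$ and $F(x)\ne F(x^* )$; $K$-stationary if $\mathrm{range}(JF(x^* ))\cap(-\mathrm{int}(K))=\emptyset$. For differentiable $\Phi$: strongly $K$-convex with $\mu\in K$ means $J\Phi(x)(y-x)+\tfrac12\|y-x\|^2\mu\preceq_K\Phi(y)-\Phi(x)$ $\forall x,y$; $K$-smooth with $\ell\in K$ means $\Phi(y)-\Phi(x)\preceq_K J\Phi(x)(y-x)+\tfrac12\|y-x\|^2\ell$ $\forall x,y$. Surrogate class $\mathcal{S}_{\ell,\mu}(F,x^k)$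 ($\ell\in K,\mu\in\mathrm{int}(K)$): differentiable $G_k$ strongly $K$-convex with $\mu$ such that, with $x^{k+1}$ the minimizer of $x\mapsto\max_{c^*\in C}\langle c^*,G_k(x)\rangle$ and $H_k:=G_k-F+F(x^k)$: $F(x^{k+1})-F(x^k)\preceq_K G_k(x^{k+1})$; $H_k$ is $K$-smooth with $\ell$, $H_k(x^k)=0$, $JH_k(x^k)=0$. Algorithm 1: from $x^0$, choose $G_k\in\mathcal{S}_{\ell,\mu}(F,x^k)$, set $x^{k+1}:=\arg\min_x\max_{c^*\in C}\langle c^*,G_k(x)\rangle$, stop if $x^{k+1}=x^k$. Assumption A(ii): whenever $x^k\to x^*$ along an infinite index set $\mathcal{K}$, $G_k\in\mathcal{S}_{\ell,\mu}(F,x^k)$ and $\max_{c^*\in C}\langle c^*,G_k(x^{k+1})\rangle\to0$ along $\mathcal{K}$, $x^*$ is $K$-stationary. *)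

theory Defs
  imports "HOL-Analysis.Analysis"
begin

definition proper_cone :: "'b::euclidean_space set \<Rightarrow> bool" where
  "proper_cone K \<longleftrightarrow> cone K \<and> closed K \<and> convex K \<and> K \<inter> uminus ` K = {0} \<and> interior K \<noteq> {}"

definition kle :: "'b::euclidean_space set \<Rightarrow> 'b \<Rightarrow> 'b \<Rightarrow> bool" where
  "kle K y y' \<longleftrightarrow> y' - y \<in> K"

definition kless :: "'b::euclidean_space set \<Rightarrow> 'b \<Rightarrow> 'b \<Rightarrow> bool" where
  "kless K y y' \<longleftrightarrow> y' - y \<in> interior K"

definition dual_cone :: "'b::euclidean_space set \<Rightarrow> 'b set" where
  "dual_cone K = {c. \<forall>y\<in>K. 0 \<le> c \<bullet> y}"

definition dual_generator :: "'b::euclidean_space set \<Rightarrow> 'b set \<Rightarrow> bool" where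
  "dual_generator K C \<longleftrightarrow> compact C \<and> convex C \<and> 0 \<notin> C \<and> cone hull C = dual_cone K"

definition efficient :: "'b::euclidean_space set \<Rightarrow> ('a \<Rightarrow> 'b) \<Rightarrow> 'a \<Rightarrow> bool" where
  "efficient K F xs \<longleftrightarrow> \<not> (\<exists>x. kle K (F x) (F xs) \<and> F x \<noteq> F xs)"

text \<open>K-stationarity; J is the derivative (Jacobian as linear map) of F at xs.\<close>
definition K_stationary :: "'b::euclidean_space set \<Rightarrow> ('a \<Rightarrow> 'a \<Rightarrow> 'b) \<Rightarrow> 'a \<Rightarrow> bool" where
  "K_stationary K J xs \<longleftrightarrow> range (J xs) \<inter> uminus ` interior K = {}"

definition strongly_K_convex ::
  "'b::euclidean_space set \<Rightarrow> ('a::real_normed_vector \<Rightarrow> 'b) \<Rightarrow> ('a \<Rightarrow> 'a \<Rightarrow> 'b) \<Rightarrow> 'b \<Rightarrow> bool" where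
  "strongly_K_convex K \<Phi> J\<Phi> \<mu> \<longleftrightarrow>
     (\<forall>x y. kle K (J\<Phi> x (y - x) + ((norm (y - x))\<^sup>2 / 2) *\<^sub>R \<mu>) (\<Phi> y - \<Phi> x))"

definition K_smooth ::
  "'b::euclidean_space set \<Rightarrow> ('a::real_normed_vector \<Rightarrow> 'b) \<Rightarrow> ('a \<Rightarrow> 'a \<Rightarrow> 'b) \<Rightarrow> 'b \<Rightarrow> bool" where
  "K_smooth K \<Phi> J\<Phi> l \<longleftrightarrow>
     (\<forall>x y. kle K (\<Phi> y - \<Phi> x) (J\<Phi> x (y - x) + ((norm (y - x))\<^sup>2 / 2) *\<^sub>R l))"

definition scal :: "'b::euclidean_space set \<Rightarrow> ('a \<Rightarrow> 'b) \<Rightarrow> 'a \<Rightarrow> real" where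
  "scal C G x = Sup ((\<lambda>c. c \<bullet> G x) ` C)"

definition is_minimizer :: "('a \<Rightarrow> real) \<Rightarrow> 'a \<Rightarrow> bool" where
  "is_minimizer f z \<longleftrightarrow> (\<forall>y. f z \<le> f y)"

text \<open>Surrogate class S_{l,mu}(F,xk); JF is the derivative of F.
  H = G - F + F xk has derivative JG - JF.\<close>
definition surrogate ::
  "'b::euclidean_space set \<Rightarrow> 'b set \<Rightarrow> ('a::euclidean_space \<Rightarrow> 'b) \<Rightarrow> ('a \<Rightarrow> 'a \<Rightarrow> 'b)
     \<Rightarrow> 'b \<Rightarrow> 'b \<Rightarrow> 'a \<Rightarrow> ('a \<Rightarrow> 'b) \<Rightarrow> bool" where
  "surrogate K C F JF l \<mu> xk G \<longleftrightarrow>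
     (\<exists>JG. (\<forall>x. (G has_derivative JG x) (at x))
        \<and> strongly_K_convex K G JG \<mu>
        \<and> (\<forall>z. is_minimizer (scal C G) z \<longrightarrow> kle K (F z - F xk) (G z))
        \<and> K_smooth K (\<lambda>x. G x - F x + F xk) (\<lambda>x v. JG x v - JF x v) l
        \<and> G xk - F xk + F xk = 0
        \<and> (\<forall>v. JG xk v - JF xk v = 0))"

end

theory Submission imports Defs begin

lemma sup_attain:
  fixes f :: "'b::topological_space \<Rightarrow> real"
  assumes "compact C" "C \<noteq> {}" "continuous_on C f"
  shows "\<exists>c\<in>C. Sup (f ` C) = f c \<and> (\<forall>c'\<in>C. f c' \<le> f c)"
proof -
  have "compact (f ` C)" using assms compact_continuous_image by blast
  then obtain s where s: "s \<in> f ` C" "\<forall>t\<in>f ` C. t \<le> s"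
    using compact_attains_sup assms(2) by blast
  then obtain c where c: "c \<in> C" "s = f c" by blast
  have "Sup (f ` C) = s" using s by (intro cSup_eq_maximum) auto
  thus ?thesis using c s by auto
qed

lemma sup_upper:
  fixes f :: "'b::topological_space \<Rightarrow> real"
  assumes "compact C" "continuous_on C f" "c \<in> C"
  shows "f c \<le> Sup (f ` C)"
proof -
  have "compact (f ` C)" using assms compact_continuous_image by blast
  hence "bdd_above (f ` C)" by (intro bounded_imp_bdd_above compact_imp_bounded)
  thus ?thesis using assms(3) by (intro cSup_upper) auto
qed

lemma kle_pair:
  assumes "kle K a b" "c \<in> dual_cone K"
  shows "c \<bullet> a \<le> c \<bullet> b"
  using assms unfolding kle_def dual_cone_def by (auto simp: inner_diff_right)

lemma dual_pos:
  fixes c v :: "'b::euclidean_space"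
  assumes "c \<in> dual_cone K" "c \<noteq> 0" "v \<in> interior K"
  shows "c \<bullet> v > 0"
proof -
  obtain e where e: "e > 0" "ball v e \<subseteq> K" using assms(3) mem_interior by blast
  define a where "a = e / 2 / norm c"
  have a: "a > 0" using e assms(2) by (simp add: a_def)
  have "dist v (v - a *\<^sub>R c) = a * norm c" using a by (simp add: dist_norm)
  also have "\<dots> = e/2" using assms(2) by (simp add: a_def)
  finally have "v - a *\<^sub>R c \<in> K" using e by (intro subsetD[OF e(2)]) auto
  hence "0 \<le> c \<bullet> (v - a *\<^sub>R c)" using assms(1) by (auto simp: dual_cone_def)
  hence "a * (c \<bullet> c) \<le> c \<bullet> v" by (simp add: inner_diff_right)
  moreover have "c \<bullet> c > 0" using assms(2) by simp
  ultimately show ?thesis using a by (smt (verit) mult_pos_pos)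
qed

lemma cone_add:
  assumes "cone K" "convex K" "a \<in> K" "b \<in> K"
  shows "a + b \<in> K"
proof -
  have "(1/2) *\<^sub>R a + (1/2) *\<^sub>R b \<in> K" using assms(2-4) unfolding convex_def by auto
  hence "2 *\<^sub>R ((1/2) *\<^sub>R a + (1/2) *\<^sub>R b) \<in> K" using assms(1) unfolding cone_def by auto
  thus ?thesis by (simp add: scaleR_add_right)
qed

lemma interior_add:
  fixes K :: "'b::euclidean_space set"
  assumes "cone K" "convex K" "k \<in> K" "v \<in> interior K" "q > 0"
  shows "k + q *\<^sub>R v \<in> interior K"
proof -
  obtain e where e: "e > 0" "ball v e \<subseteq> K" using assms(4) mem_interior by blast
  have "ball (k + q *\<^sub>R v) (q * e) \<subseteq> K"
  proof
    fix u assume u: "u \<in> ball (k + q *\<^sub>R v) (q * e)"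
    define p where "p = v + (1/q) *\<^sub>R (u - (k + q *\<^sub>R v))"
    have "dist v p = (1/q) * norm (u - (k + q *\<^sub>R v))"
      using assms(5) by (simp add: p_def dist_norm)
    also have "\<dots> < e" using u assms(5)
      by (simp add: dist_norm norm_minus_commute field_simps)
    finally have "p \<in> K" using e by auto
    hence "q *\<^sub>R p \<in> K" using assms(1,5) unfolding cone_def by auto
    moreover have "u = k + q *\<^sub>R p" using assms(5) by (simp add: p_def algebra_simps)
    ultimately show "u \<in> K" using cone_add[OF assms(1,2,3)] by simp
  qed
  thus ?thesis using e assms(5) mem_interior by (metis mult_pos_pos)
qed

lemma rate_step:
  fixes K C :: "'b::euclidean_space set" and G F :: "'a::euclidean_space \<Rightarrow> 'b"
  assumes Kc: "cone K" "convex K" and CD: "C \<subseteq> dual_cone K" and Cc: "compact C"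
    and Cne: "C \<noteq> {}" and C0: "0 \<notin> C" and mu: "\<mu> \<in> interior K"
    and Gd: "\<And>x. (G has_derivative JG x) (at x)"
    and sc: "strongly_K_convex K G JG \<mu>"
    and sm: "K_smooth K (\<lambda>x. G x - F x + F xk) (\<lambda>x v. JG x v - JF x v) l"
    and G0: "G xk = 0" and JG0: "\<And>v. JG xk v - JF xk v = 0"
    and minz: "is_minimizer (scal C G) z"
    and desc: "kle K (F z - F xk) (G z)"
    and yL: "\<And>c. c \<in> C \<Longrightarrow> c \<bullet> F y \<le> c \<bullet> F z"
  shows "(norm (z - y))\<^sup>2 \<le> Sup ((\<lambda>c. (c \<bullet> l) / (c \<bullet> \<mu>)) ` C) * (norm (xk - y))\<^sup>2"
proof -
  define D where "D = (norm (z - y))\<^sup>2"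
  define E where "E = (norm (xk - y))\<^sup>2"
  define S where "S = Sup ((\<lambda>c. (c \<bullet> l) / (c \<bullet> \<mu>)) ` C)"
  have mpos: "\<And>c. c \<in> C \<Longrightarrow> c \<bullet> \<mu> > 0" using dual_pos[OF _ _ mu] CD C0 by blast
  have contr: "continuous_on C (\<lambda>c. (c \<bullet> l) / (c \<bullet> \<mu>))"
    using mpos by (intro continuous_intros) (metis less_irrefl)
  have E0: "E \<ge> 0" by (simp add: E_def)
  have key: "(1 - t) * D \<le> E * S" if t: "0 < t" "t < 1" for t
  proof -
    define w where "w = z + t *\<^sub>R (y - z)"
    have cont: "\<And>v. continuous_on C (\<lambda>c. c \<bullet> v)" by (intro continuous_intros)
    obtain c where c: "c \<in> C" "scal C G w = c \<bullet> G w"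
      using sup_attain[OF Cc Cne cont[of "G w"]] unfolding scal_def by auto
    have cd: "c \<in> dual_cone K" using c CD by auto
    have m: "c \<bullet> \<mu> > 0" using mpos c by auto
    have "c \<bullet> G z \<le> scal C G z" unfolding scal_def using sup_upper[OF Cc cont c(1)] .
    also have "\<dots> \<le> scal C G w" using minz unfolding is_minimizer_def by auto
    finally have gzw: "c \<bullet> G z \<le> c \<bullet> G w" using c by simp
    have lin: "linear (JG w)" using Gd has_derivative_linear by blast
    define p where "p = c \<bullet> JG w (y - z)"
    have yw: "y - w = (1 - t) *\<^sub>R (y - z)" by (simp add: w_def algebra_simps)
    have zw: "z - w = (- t) *\<^sub>R (y - z)" by (simp add: w_def algebra_simps)
    have A: "(1 - t) * p + ((1 - t)^2 * D / 2) * (c \<bullet> \<mu>) \<le> c \<bullet> G y - c \<bullet> G w"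
    proof -
      have "kle K (JG w (y - w) + ((norm (y - w))\<^sup>2 / 2) *\<^sub>R \<mu>) (G y - G w)"
        using sc unfolding strongly_K_convex_def by blast
      from kle_pair[OF this cd] show ?thesis
        using t unfolding yw linear_cmul[OF lin] p_def D_def
        by (simp add: inner_add_right inner_diff_right power_mult_distrib abs_of_pos norm_minus_commute)
    qed
    have B: "(- t) * p + (t^2 * D / 2) * (c \<bullet> \<mu>) \<le> c \<bullet> G z - c \<bullet> G w"
    proof -
      have "kle K (JG w (z - w) + ((norm (z - w))\<^sup>2 / 2) *\<^sub>R \<mu>) (G z - G w)"
        using sc unfolding strongly_K_convex_def by blast
      from kle_pair[OF this cd] show ?thesis
        using t unfolding zw linear_cmul[OF lin] p_def D_def
        by (simp add: inner_add_right inner_diff_right power_mult_distrib abs_of_pos norm_minus_commute)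
    qed
    have A': "t * ((1 - t) * p + ((1 - t)^2 * D / 2) * (c \<bullet> \<mu>)) \<le> t * (c \<bullet> G y - c \<bullet> G w)"
      using A t by (intro mult_left_mono) auto
    have B': "(1 - t) * ((- t) * p + (t^2 * D / 2) * (c \<bullet> \<mu>)) \<le> (1 - t) * (c \<bullet> G z - c \<bullet> G w)"
      using B t by (intro mult_left_mono) auto
    have eq: "t * ((1 - t) * p + ((1 - t)^2 * D / 2) * (c \<bullet> \<mu>)) + (1 - t) * ((- t) * p + (t^2 * D / 2) * (c \<bullet> \<mu>))
        = t * ((1 - t) * D * (c \<bullet> \<mu>) / 2)"
      by (simp add: field_simps power2_eq_square)
    have "t * ((1 - t) * D * (c \<bullet> \<mu>) / 2) \<le> t * (c \<bullet> G y - c \<bullet> G z)"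
    proof -
      have "t * ((1 - t) * D * (c \<bullet> \<mu>) / 2) \<le> t * (c \<bullet> G y - c \<bullet> G w) + (1 - t) * (c \<bullet> G z - c \<bullet> G w)"
        using add_mono[OF A' B'] unfolding eq .
      moreover have "t * (c \<bullet> G y - c \<bullet> G w) + (1 - t) * (c \<bullet> G z - c \<bullet> G w)
          = t * (c \<bullet> G y - c \<bullet> G z) + (c \<bullet> G z - c \<bullet> G w)" by (simp add: algebra_simps)
      ultimately show ?thesis using gzw by linarith
    qed
    hence g1: "(1 - t) * D * (c \<bullet> \<mu>) / 2 \<le> c \<bullet> G y - c \<bullet> G z" using t by simp
    have g2: "c \<bullet> G y - c \<bullet> F y + c \<bullet> F xk \<le> E / 2 * (c \<bullet> l)"
    proof -
      have "kle K ((G y - F y + F xk) - (G xk - F xk + F xk))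
               ((JG xk (y - xk) - JF xk (y - xk)) + ((norm (y - xk))\<^sup>2 / 2) *\<^sub>R l)"
        using sm unfolding K_smooth_def by blast
      from kle_pair[OF this cd] show ?thesis
        using JG0[of "y - xk"] G0 unfolding E_def
        by (simp add: inner_add_right inner_diff_right norm_minus_commute)
    qed
    have g3: "c \<bullet> F z - c \<bullet> F xk \<le> c \<bullet> G z"
      using kle_pair[OF desc cd] by (simp add: inner_diff_right)
    have g4: "c \<bullet> F y \<le> c \<bullet> F z" using yL c by auto
    have "(1 - t) * D * (c \<bullet> \<mu>) \<le> E * (c \<bullet> l)" using g1 g2 g3 g4 by linarith
    hence "(1 - t) * D \<le> E * (c \<bullet> l) / (c \<bullet> \<mu>)" using m by (simp add: field_simps)
    also have "\<dots> = E * ((c \<bullet> l) / (c \<bullet> \<mu>))" by simp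
    also have "\<dots> \<le> E * S" unfolding S_def
      using sup_upper[OF Cc contr c(1)] E0 by (intro mult_left_mono) auto
    finally show ?thesis .
  qed
  show ?thesis
  proof (rule ccontr)
    assume "\<not> ?thesis"
    hence DE: "D > E * S" unfolding D_def E_def S_def by (simp add: mult.commute)
    have Dp: "D > 0"
    proof (rule ccontr)
      assume "\<not> D > 0"
      hence "D = 0" unfolding D_def by simp
      thus False using key[of "1/2"] DE by simp
    qed
    have ESp: "E * S \<ge> 0"
    proof (rule ccontr)
      assume "\<not> E * S \<ge> 0"
      thus False using key[of "1/2"] Dp by simp
    qed
    define t where "t = (D - E * S) / (2 * D)"
    have t: "0 < t" "t < 1" using DE Dp ESp by (auto simp: t_def field_simps)
    have "(1 - t) * D = (D + E * S) / 2" using Dp by (simp add: t_def field_simps)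
    hence "(D + E * S) / 2 \<le> E * S" using key[OF t] by simp
    thus False using DE by (simp add: field_simps)
  qed
qed
theorem theorem3:
  fixes K C :: "'b::euclidean_space set"
    and F :: "'a::euclidean_space \<Rightarrow> 'b" and JF :: "'a \<Rightarrow> 'a \<Rightarrow> 'b"
    and l \<mu> :: 'b
    and x :: "nat \<Rightarrow> 'a" and G :: "nat \<Rightarrow> 'a \<Rightarrow> 'b"
  assumes K: "proper_cone K"
    and C: "dual_generator K C"
    and F_deriv: "\<And>z. (F has_derivative JF z) (at z)"
    and F_sconv: "\<exists>\<mu>F \<in> interior K. strongly_K_convex K F JF \<mu>F"
    and l_in: "l \<in> K" and mu_in: "\<mu> \<in> interior K"
    and l_less_mu: "kless K l \<mu>"
    and G_surr: "\<And>k. surrogate K C F JF l \<mu> (x k) (G k)"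
    and step: "\<And>k. is_minimizer (scal C (G k)) (x (Suc k))"
    and infinite_run: "\<And>k. x (Suc k) \<noteq> x k"
    and A_ii: "\<And>r xs. strict_mono r \<Longrightarrow> (x \<circ> r) \<longlonglongrightarrow> xs
                 \<Longrightarrow> (\<lambda>j. scal C (G (r j)) (x (Suc (r j)))) \<longlonglongrightarrow> 0
                 \<Longrightarrow> K_stationary K JF xs"
  shows "\<exists>xs. x \<longlonglongrightarrow> xs \<and> efficient K F xs \<and>
           (\<forall>k. norm (x (Suc k) - xs)
                  \<le> sqrt (Sup ((\<lambda>c. (c \<bullet> l) / (c \<bullet> \<mu>)) ` C)) * norm (x k - xs))"
proof -
  have Kc: "cone K" "convex K" "closed K" using K unfolding proper_cone_def by auto
  have Cc: "compact C" and C0: "0 \<notin> C" and Ch: "cone hull C = dual_cone K"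
    using C unfolding dual_generator_def by auto
  have CD: "C \<subseteq> dual_cone K" using hull_subset[of C cone] Ch by simp
  have Cne: "C \<noteq> {}"
  proof
    assume "C = {}"
    hence "dual_cone K = {}" using Ch cone_hull_empty by metis
    moreover have "(0::'b) \<in> dual_cone K" by (simp add: dual_cone_def)
    ultimately show False by simp
  qed
  have "\<forall>k. \<exists>JG. (\<forall>x. (G k has_derivative JG x) (at x))
        \<and> strongly_K_convex K (G k) JG \<mu>
        \<and> (\<forall>z. is_minimizer (scal C (G k)) z \<longrightarrow> kle K (F z - F (x k)) (G k z))
        \<and> K_smooth K (\<lambda>z. G k z - F z + F (x k)) (\<lambda>z v. JG z v - JF z v) l
        \<and> G k (x k) - F (x k) + F (x k) = 0
        \<and> (\<forall>v. JG (x k) v - JF (x k) v = 0)"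
    using G_surr unfolding surrogate_def by blast
  from choice[OF this] obtain JG where JG: "\<And>k. (\<forall>z. (G k has_derivative JG k z) (at z))
        \<and> strongly_K_convex K (G k) (JG k) \<mu>
        \<and> (\<forall>z. is_minimizer (scal C (G k)) z \<longrightarrow> kle K (F z - F (x k)) (G k z))
        \<and> K_smooth K (\<lambda>z. G k z - F z + F (x k)) (\<lambda>z v. JG k z v - JF z v) l
        \<and> G k (x k) - F (x k) + F (x k) = 0
        \<and> (\<forall>v. JG k (x k) v - JF (x k) v = 0)" by blast
  have cont: "\<And>v. continuous_on C (\<lambda>c. c \<bullet> v)" by (intro continuous_intros)
  have G0: "\<And>k. G k (x k) = 0" using JG by auto
  have supp: "\<And>k z c. c \<in> C \<Longrightarrow> c \<bullet> G k z \<le> scal C (G k) z"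
    unfolding scal_def using sup_upper[OF Cc cont] by blast
  have scal0: "\<And>k. scal C (G k) (x k) = 0"
    unfolding scal_def G0 using Cne by (simp add: image_constant_conv)
  have scal_le: "\<And>k. scal C (G k) (x (Suc k)) \<le> 0"
    using step scal0 unfolding is_minimizer_def by metis
  have desc: "\<And>k. kle K (F (x (Suc k)) - F (x k)) (G k (x (Suc k)))"
    using JG step by blast
  have dec1: "\<And>c k. c \<in> C \<Longrightarrow> c \<bullet> F (x (Suc k)) \<le> c \<bullet> F (x k)"
  proof -
    fix c k assume c: "c \<in> C"
    have "c \<bullet> (F (x (Suc k)) - F (x k)) \<le> c \<bullet> G k (x (Suc k))"
      using kle_pair[OF desc] c CD by auto
    also have "\<dots> \<le> 0" using supp[OF c] scal_le order_trans by blast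
    finally show "c \<bullet> F (x (Suc k)) \<le> c \<bullet> F (x k)" by (simp add: inner_diff_right)
  qed
  have decn: "\<And>c j n. c \<in> C \<Longrightarrow> j \<le> n \<Longrightarrow> c \<bullet> F (x n) \<le> c \<bullet> F (x j)"
  proof -
    fix c and j n :: nat assume c: "c \<in> C" and jn: "j \<le> n"
    have "antimono_on UNIV (\<lambda>k. c \<bullet> F (x k))" using dec1[OF c] by (intro decseq_SucI)
    thus "c \<bullet> F (x n) \<le> c \<bullet> F (x j)" using decseqD[of "\<lambda>k. c \<bullet> F (x k)" j n] jn by simp
  qed
  obtain c0 where c0: "c0 \<in> C" using Cne by blast
  have c0d: "c0 \<in> dual_cone K" "c0 \<noteq> 0" using c0 CD C0 by auto
  obtain \<mu>F where muF: "\<mu>F \<in> interior K" "strongly_K_convex K F JF \<mu>F" using F_sconv by blast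
  define a where "a = c0 \<bullet> \<mu>F"
  have a: "a > 0" unfolding a_def using dual_pos[OF c0d muF(1)] .
  obtain B where B: "B > 0" "\<And>v. norm (JF (x 0) v) \<le> norm v * B"
    using bounded_linear.pos_bounded[OF has_derivative_bounded_linear[OF F_deriv[of "x 0"]]] by blast
  define R where "R = 2 * norm c0 * B / a"
  have bnd: "norm (x k - x 0) \<le> R" for k
  proof -
    define v where "v = x k - x 0"
    define n where "n = norm v"
    have "kle K (JF (x 0) v + (n\<^sup>2 / 2) *\<^sub>R \<mu>F) (F (x k) - F (x 0))"
      using muF(2) unfolding strongly_K_convex_def v_def n_def by blast
    from kle_pair[OF this c0d(1)]
    have h1: "c0 \<bullet> JF (x 0) v + n\<^sup>2 / 2 * a \<le> c0 \<bullet> F (x k) - c0 \<bullet> F (x 0)"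
      by (simp add: inner_add_right inner_diff_right a_def)
    have h2: "c0 \<bullet> F (x k) \<le> c0 \<bullet> F (x 0)" using decn[OF c0] by simp
    have "\<bar>c0 \<bullet> JF (x 0) v\<bar> \<le> norm c0 * norm (JF (x 0) v)" by (rule Cauchy_Schwarz_ineq2)
    also have "\<dots> \<le> norm c0 * (n * B)" using B(2)[of v] unfolding n_def
      by (intro mult_left_mono) auto
    finally have h3: "- (norm c0 * (n * B)) \<le> c0 \<bullet> JF (x 0) v" by linarith
    have h4: "n * (n * a / 2) \<le> n * (norm c0 * B)"
      using h1 h2 h3 by (simp add: power2_eq_square algebra_simps)
    have "n \<le> R"
    proof (cases "n = 0")
      case True thus ?thesis using a B unfolding R_def by simp
    next
      case False
      hence "n > 0" unfolding n_def by simp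
      hence "n * a / 2 \<le> norm c0 * B" using h4 by simp
      thus ?thesis using a unfolding R_def by (simp add: field_simps)
    qed
    thus ?thesis unfolding n_def v_def .
  qed
  have "range x \<subseteq> cball (x 0) R" using bnd by (auto simp: dist_norm norm_minus_commute)
  hence "bounded (range x)" using bounded_cball bounded_subset by blast
  then obtain y r where r: "strict_mono r" "(x \<circ> r) \<longlonglongrightarrow> y"
    using bounded_imp_convergent_subsequence by blast
  have Fc: "\<And>z. isCont F z" using F_deriv has_derivative_continuous by blast
  have yL: "\<And>c j. c \<in> C \<Longrightarrow> c \<bullet> F y \<le> c \<bullet> F (x j)"
  proof -
    fix c j assume c: "c \<in> C"
    have "(\<lambda>n. F ((x \<circ> r) n)) \<longlonglongrightarrow> F y" using isCont_tendsto_compose[OF Fc r(2)] .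
    hence "(\<lambda>n. c \<bullet> F (x (r n))) \<longlonglongrightarrow> c \<bullet> F y" by (intro tendsto_intros) auto
    moreover have "\<exists>N. \<forall>n\<ge>N. c \<bullet> F (x (r n)) \<le> c \<bullet> F (x j)"
      using decn[OF c] seq_suble[OF r(1)] by (meson order_trans)
    ultimately show "c \<bullet> F y \<le> c \<bullet> F (x j)" by (rule LIMSEQ_le_const2)
  qed
  define S where "S = Sup ((\<lambda>c. (c \<bullet> l) / (c \<bullet> \<mu>)) ` C)"
  have rate: "(norm (x (Suc k) - y))\<^sup>2 \<le> S * (norm (x k - y))\<^sup>2" for k
    unfolding S_def
    apply (rule rate_step[OF Kc(1,2) CD Cc Cne C0 mu_in, of "G k" "JG k" F "x k" JF l "x (Suc k)" y])
    using JG[of k] step[of k] yL by auto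
  have mpos: "\<And>c. c \<in> C \<Longrightarrow> c \<bullet> \<mu> > 0" using dual_pos[OF _ _ mu_in] CD C0 by blast
  have contr: "continuous_on C (\<lambda>c. (c \<bullet> l) / (c \<bullet> \<mu>))"
    using mpos by (intro continuous_intros) (metis less_irrefl)
  obtain c1 where c1: "c1 \<in> C" "S = (c1 \<bullet> l) / (c1 \<bullet> \<mu>)"
    using sup_attain[OF Cc Cne contr] unfolding S_def by blast
  have m1: "c1 \<bullet> \<mu> > 0" using mpos c1 by auto
  have "c1 \<bullet> (\<mu> - l) > 0" using dual_pos[of c1 K "\<mu> - l"] c1 CD C0 l_less_mu
    unfolding kless_def by auto
  hence lm: "c1 \<bullet> l < c1 \<bullet> \<mu>" by (simp add: inner_diff_right)
  have S1: "S < 1" unfolding c1(2) using divide_less_eq_1_pos[OF m1] lm by blast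
  have "c1 \<bullet> l \<ge> 0" using c1 CD l_in by (auto simp: dual_cone_def)
  hence S0: "S \<ge> 0" using m1 c1(2) by simp
  define \<rho> where "\<rho> = sqrt S"
  have rho: "0 \<le> \<rho>" "\<rho> < 1" using S0 S1 unfolding \<rho>_def by auto
  have rate': "norm (x (Suc k) - y) \<le> \<rho> * norm (x k - y)" for k
  proof -
    have "sqrt ((norm (x (Suc k) - y))\<^sup>2) \<le> sqrt (S * (norm (x k - y))\<^sup>2)"
      using rate[of k] by (rule real_sqrt_le_mono)
    thus ?thesis unfolding \<rho>_def by (simp add: real_sqrt_mult)
  qed
  have geo: "norm (x k - y) \<le> \<rho> ^ k * norm (x 0 - y)" for k
  proof (induction k)
    case 0 thus ?case by simp
  next
    case (Suc k)
    have "norm (x (Suc k) - y) \<le> \<rho> * norm (x k - y)" by (rule rate')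
    also have "\<dots> \<le> \<rho> * (\<rho> ^ k * norm (x 0 - y))" using Suc rho by (intro mult_left_mono) auto
    finally show ?case by (simp add: mult.assoc)
  qed
  have conv: "x \<longlonglongrightarrow> y"
  proof -
    have "(\<lambda>k. \<rho> ^ k) \<longlonglongrightarrow> 0" using LIMSEQ_power_zero[of \<rho>] rho by simp
    hence g: "(\<lambda>k. \<rho> ^ k * norm (x 0 - y)) \<longlonglongrightarrow> 0" by (rule tendsto_mult_left_zero)
    have "(\<lambda>k. x k - y) \<longlonglongrightarrow> 0"
      apply (rule Lim_null_comparison[OF _ g])
      using geo by (simp add: always_eventually)
    thus ?thesis using Lim_null by blast
  qed
  have stat: "K_stationary K JF y"
  proof (rule A_ii[of id])
    show "strict_mono id" by (rule strict_mono_id)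
    show "(x \<circ> id) \<longlonglongrightarrow> y" using conv by simp
    have Fx: "(\<lambda>j. F (x j)) \<longlonglongrightarrow> F y" using isCont_tendsto_compose[OF Fc conv] .
    have low0: "(\<lambda>j. c0 \<bullet> F (x (Suc j)) - c0 \<bullet> F (x j)) \<longlonglongrightarrow> c0 \<bullet> F y - c0 \<bullet> F y"
      by (intro tendsto_intros LIMSEQ_Suc Fx)
    hence low: "(\<lambda>j. c0 \<bullet> F (x (Suc j)) - c0 \<bullet> F (x j)) \<longlonglongrightarrow> 0" by simp
    have lowle: "c0 \<bullet> F (x (Suc j)) - c0 \<bullet> F (x j) \<le> scal C (G j) (x (Suc j))" for j
    proof -
      have "c0 \<bullet> (F (x (Suc j)) - F (x j)) \<le> c0 \<bullet> G j (x (Suc j))"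
        using kle_pair[OF desc c0d(1)] .
      also have "\<dots> \<le> scal C (G j) (x (Suc j))" by (rule supp[OF c0])
      finally show ?thesis by (simp add: inner_diff_right)
    qed
    have "(\<lambda>j. scal C (G j) (x (Suc j))) \<longlonglongrightarrow> 0"
      apply (rule tendsto_sandwich[OF always_eventually always_eventually low, of _ "\<lambda>_. 0"])
      using lowle scal_le by auto
    thus "(\<lambda>j. scal C (G (id j)) (x (Suc (id j)))) \<longlonglongrightarrow> 0" by simp
  qed
  have eff: "efficient K F y"
    unfolding efficient_def
  proof
    assume "\<exists>z. kle K (F z) (F y) \<and> F z \<noteq> F y"
    then obtain z where z: "kle K (F z) (F y)" "F z \<noteq> F y" by blast
    have zy: "z \<noteq> y" using z by auto
    define q where "q = (norm (z - y))\<^sup>2 / 2"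
    have q: "q > 0" using zy by (simp add: q_def)
    define w where "w = JF y (z - y)"
    have "(F z - F y) - (w + q *\<^sub>R \<mu>F) \<in> K"
      using muF(2) unfolding strongly_K_convex_def kle_def w_def q_def by blast
    moreover have "F y - F z \<in> K" using z(1) unfolding kle_def .
    ultimately have "((F z - F y) - (w + q *\<^sub>R \<mu>F)) + (F y - F z) \<in> K"
      using cone_add[OF Kc(1,2)] by blast
    hence "(- w - q *\<^sub>R \<mu>F) \<in> K" by (simp add: algebra_simps)
    hence "(- w - q *\<^sub>R \<mu>F) + q *\<^sub>R \<mu>F \<in> interior K"
      using interior_add[OF Kc(1,2) _ muF(1) q] by blast
    hence "- w \<in> interior K" by simp
    hence "w \<in> uminus ` interior K" by (metis image_eqI minus_minus)
    moreover have "w \<in> range (JF y)" unfolding w_def by simp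
    ultimately show False using stat unfolding K_stationary_def by blast
  qed
  show ?thesis
    using conv eff rate' unfolding \<rho>_def S_def by blast
qed

end
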